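(* Let $K\ge1$, $\mathcal{X}$ a measurable space, $\mathcal{Z}=\mathcal{X}\times\{1,\ldots,K\}$, $\Theta$ a parameter set and $\ell:\Theta\times\mathcal{Z}\to\mathbb{R}_+$ measurable with $L=\sup_{(\theta,z)\in\Theta\times\mathcal{Z}}\ell(\theta,z)<\infty$. Let $Z'_i=(X'_i,S'_i)$, $i=1,\ldots,n$, be i.i.d. random elements of $\mathcal{Z}$ with $p'_k=\mathbb{P}(S'_1=k)$, and let $p_1,\ldots,p_K\ge0$ be given numbers with $\sum_k p_k=1$. Let $\varepsilon\in(0,1/2)$ and suppose $p'_k\in(\varepsilon,1-\varepsilon)$ for all $k$. Let $n'_k=\sum_{i=1}^n\mathbb{I}\{S'_i=k\}$ and define $$\widetilde{\mathcal{R}}_{w^*,n}(\theta)=\frac{1}{n}\sum_{i=1}^n\ell(\theta,Z'_i)\sum_{k=1}^K\mathbb{I}\{S'_i=k\}\frac{p_k}{p'_k},\qquad \widetilde{\mathcal{R}}_{\widehat{w}^*,n}(\theta)=\sum_{i=1}^n\ell(\theta,Z'_i)\sum_{k=1}^K\mathbb{I}\{S'_i=k\}\frac{p_k}{n'_k}.$$ Then for any $\delta\in(0,1)$, as soon as $n\ge 2\log(2K/\delta)/\varepsilon^2$, with probability larger than $1-\delta$, $$\sup_{\theta\in\Theta}\left|\widetilde{\mathcal{R}}_{\widehat{w}^*,n}(\theta)-\widetilde{\mathcal{R}}_{w^*,n}(\theta)\right|\le\frac{2L}{\varepsilon^2}\sqrt{\frac{\log(2K/\delta)}{2n}}.$$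
   Context: $\mathbb{I}\{\cdot\}$ denotes the indicator function. *)

theory Defs
  imports "HOL-Probability.Probability"
begin

definition count_class :: "(nat \<Rightarrow> 'a \<Rightarrow> nat) \<Rightarrow> nat \<Rightarrow> nat \<Rightarrow> 'a \<Rightarrow> real" where
  "count_class S n k \<omega> = (\<Sum>i=1..n. if S i \<omega> = k then 1 else 0)"

definition risk_true_w ::
  "('t \<Rightarrow> 'x \<times> nat \<Rightarrow> real) \<Rightarrow> (nat \<Rightarrow> 'a \<Rightarrow> 'x) \<Rightarrow> (nat \<Rightarrow> 'a \<Rightarrow> nat)
   \<Rightarrow> nat \<Rightarrow> nat \<Rightarrow> (nat \<Rightarrow> real) \<Rightarrow> (nat \<Rightarrow> real) \<Rightarrow> 't \<Rightarrow> 'a \<Rightarrow> real" where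
  "risk_true_w loss X S K n p p' \<theta> \<omega> =
     (1 / real n) * (\<Sum>i=1..n. loss \<theta> (X i \<omega>, S i \<omega>) *
        (\<Sum>k=1..K. (if S i \<omega> = k then 1 else 0) * (p k / p' k)))"

definition risk_est_w ::
  "('t \<Rightarrow> 'x \<times> nat \<Rightarrow> real) \<Rightarrow> (nat \<Rightarrow> 'a \<Rightarrow> 'x) \<Rightarrow> (nat \<Rightarrow> 'a \<Rightarrow> nat)
   \<Rightarrow> nat \<Rightarrow> nat \<Rightarrow> (nat \<Rightarrow> real) \<Rightarrow> 't \<Rightarrow> 'a \<Rightarrow> real" where
  "risk_est_w loss X S K n p \<theta> \<omega> =
     (\<Sum>i=1..n. loss \<theta> (X i \<omega>, S i \<omega>) *
        (\<Sum>k=1..K. (if S i \<omega> = k then 1 else 0) * (p k / count_class S n k \<omega>)))"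

end

theory Submission
  imports Defs
begin


lemma det_bound:
  fixes l :: "nat \<Rightarrow> real" and s :: "nat \<Rightarrow> nat" and p q c :: "nat \<Rightarrow> real"
  assumes s: "\<And>i. i \<in> {1..n} \<Longrightarrow> s i \<in> {1..K}"
    and l: "\<And>i. i \<in> {1..n} \<Longrightarrow> 0 \<le> l i \<and> l i \<le> L"
    and p: "\<And>k. k \<in> {1..K} \<Longrightarrow> p k \<ge> 0" and psum: "(\<Sum>k=1..K. p k) = 1"
    and q: "\<And>k. k \<in> {1..K} \<Longrightarrow> \<epsilon> < q k" and eps: "0 < \<epsilon>"
    and c_def: "\<And>k. c k = (\<Sum>i=1..n. if s i = k then 1 else 0)"
    and dev: "\<And>k. k \<in> {1..K} \<Longrightarrow> \<bar>c k / real n - q k\<bar> \<le> t"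
    and n: "n > 0" and t: "t \<ge> 0"
  shows "\<bar>(\<Sum>i=1..n. l i * (\<Sum>k=1..K. (if s i = k then 1 else 0) * (p k / c k)))
          - (1 / real n) * (\<Sum>i=1..n. l i * (\<Sum>k=1..K. (if s i = k then 1 else 0) * (p k / q k)))\<bar>
         \<le> L * t / \<epsilon>"
proof -
  define d where "d k = p k / c k - p k / (real n * q k)" for k
  have eq: "(\<Sum>i=1..n. l i * (\<Sum>k=1..K. (if s i = k then 1 else 0) * (p k / c k)))
          - (1 / real n) * (\<Sum>i=1..n. l i * (\<Sum>k=1..K. (if s i = k then 1 else 0) * (p k / q k)))
        = (\<Sum>i=1..n. \<Sum>k=1..K. l i * (if s i = k then 1 else 0) * d k)"
    by (simp add: d_def sum_distrib_left sum_subtractf[symmetric] algebra_simps)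
  have "\<bar>\<Sum>i=1..n. \<Sum>k=1..K. l i * (if s i = k then 1 else 0) * d k\<bar>
        \<le> (\<Sum>i=1..n. \<Sum>k=1..K. \<bar>l i * (if s i = k then 1 else 0) * d k\<bar>)"
    by (rule order_trans[OF sum_abs]) (intro sum_mono sum_abs)
  also have "\<dots> \<le> (\<Sum>i=1..n. \<Sum>k=1..K. L * ((if s i = k then 1 else 0) * \<bar>d k\<bar>))"
  proof (intro sum_mono)
    fix i k assume i: "i \<in> {1..n}"
    show "\<bar>l i * (if s i = k then 1 else 0) * d k\<bar> \<le> L * ((if s i = k then 1 else 0) * \<bar>d k\<bar>)"
      using l[OF i] by (auto simp: abs_mult intro: mult_right_mono)
  qed
  also have "\<dots> = L * (\<Sum>k=1..K. \<bar>d k\<bar> * c k)"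
    by (subst sum.swap) (simp add: c_def sum_distrib_left sum_distrib_right mult_ac)
  also have "\<dots> \<le> L * (\<Sum>k=1..K. p k * t / \<epsilon>)"
  proof -
    have "L \<ge> 0" using l[of 1] n by auto
    moreover have "(\<Sum>k=1..K. \<bar>d k\<bar> * c k) \<le> (\<Sum>k=1..K. p k * t / \<epsilon>)"
    proof (intro sum_mono)
      fix k assume k: "k \<in> {1..K}"
      have qk: "q k > 0" using q[OF k] eps by linarith
      have pk: "p k \<ge> 0" using p[OF k] .
      have ptq: "p k * t / q k \<le> p k * t / \<epsilon>"
        using qk q[OF k] eps pk t by (intro divide_left_mono) (auto intro: mult_nonneg_nonneg mult_pos_pos)
      show "\<bar>d k\<bar> * c k \<le> p k * t / \<epsilon>"
      proof (cases "c k = 0")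
        case True then show ?thesis using pk t eps by simp
      next
        case False
        have c0: "c k \<ge> 0" unfolding c_def by (intro sum_nonneg) auto
        have "\<bar>d k\<bar> * c k = p k * \<bar>c k / real n - q k\<bar> / q k"
          using False c0 qk n pk unfolding d_def
          by (simp add: abs_mult abs_divide field_simps abs_minus_commute)
             (metis abs_mult abs_of_nonneg right_diff_distrib mult.commute mult.left_commute)
        also have "\<dots> \<le> p k * t / q k"
          using dev[OF k] pk qk by (intro divide_right_mono mult_left_mono) auto
        finally show ?thesis using ptq by linarith
      qed
    qed
    ultimately show ?thesis by (simp add: mult_left_mono)
  qed
  also have "\<dots> = L * t / \<epsilon>"
    using psum by (simp add: sum_divide_distrib[symmetric] sum_distrib_right[symmetric])
  finally show ?thesis using eq by simp
qed

theorem lemma3: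
  fixes M :: "'a measure" and Xsp :: "'x measure"
    and Theta :: "'t set" and loss :: "'t \<Rightarrow> 'x \<times> nat \<Rightarrow> real"
    and X :: "nat \<Rightarrow> 'a \<Rightarrow> 'x" and S :: "nat \<Rightarrow> 'a \<Rightarrow> nat"
    and K n :: nat and p :: "nat \<Rightarrow> real" and L \<epsilon> \<delta> :: real
  assumes "prob_space M"
    and "K \<ge> 1"
    and loss_meas: "\<And>\<theta>. \<theta> \<in> Theta \<Longrightarrow> loss \<theta> \<in> borel_measurable (Xsp \<Otimes>\<^sub>M count_space {1..K})"
    and loss_nonneg: "\<And>\<theta> z. \<theta> \<in> Theta \<Longrightarrow> z \<in> space Xsp \<times> {1..K} \<Longrightarrow> loss \<theta> z \<ge> 0"
    and loss_bdd: "bdd_above ((\<lambda>(\<theta>, z). loss \<theta> z) ` (Theta \<times> (space Xsp \<times> {1..K})))"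
    and L_def: "L = (SUP (\<theta>, z) \<in> Theta \<times> (space Xsp \<times> {1..K}). loss \<theta> z)"
    and rv: "\<And>i. i \<in> {1..n} \<Longrightarrow>
               (\<lambda>\<omega>. (X i \<omega>, S i \<omega>)) \<in> M \<rightarrow>\<^sub>M (Xsp \<Otimes>\<^sub>M count_space {1..K})"
    and indep: "prob_space.indep_vars M (\<lambda>_. Xsp \<Otimes>\<^sub>M count_space {1..K})
                  (\<lambda>i \<omega>. (X i \<omega>, S i \<omega>)) {1..n}"
    and ident: "\<And>i. i \<in> {1..n} \<Longrightarrow>
               distr M (Xsp \<Otimes>\<^sub>M count_space {1..K}) (\<lambda>\<omega>. (X i \<omega>, S i \<omega>)) =
               distr M (Xsp \<Otimes>\<^sub>M count_space {1..K}) (\<lambda>\<omega>. (X 1 \<omega>, S 1 \<omega>))"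
    and p_nonneg: "\<And>k. k \<in> {1..K} \<Longrightarrow> p k \<ge> 0"
    and p_sum: "(\<Sum>k=1..K. p k) = 1"
    and eps: "0 < \<epsilon>" "\<epsilon> < 1/2"
    and p'_range: "\<And>k. k \<in> {1..K} \<Longrightarrow>
               \<epsilon> < measure M {\<omega> \<in> space M. S 1 \<omega> = k} \<and>
               measure M {\<omega> \<in> space M. S 1 \<omega> = k} < 1 - \<epsilon>"
    and delta: "0 < \<delta>" "\<delta> < 1"
    and n_large: "real n \<ge> 2 * ln (2 * real K / \<delta>) / \<epsilon>\<^sup>2"
  shows "\<exists>A \<in> sets M. measure M A \<ge> 1 - \<delta> \<and>
           (\<forall>\<omega> \<in> A. \<forall>\<theta> \<in> Theta.
              \<bar>risk_est_w loss X S K n p \<theta> \<omega>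
               - risk_true_w loss X S K n p (\<lambda>k. measure M {\<omega> \<in> space M. S 1 \<omega> = k}) \<theta> \<omega>\<bar>
              \<le> 2 * L / \<epsilon>\<^sup>2 * sqrt (ln (2 * real K / \<delta>) / (2 * real n)))"
proof -
  interpret prob_space M by fact
  have K0: "real K \<ge> 1" using \<open>K \<ge> 1\<close> by simp
  have lnpos: "ln (2 * real K / \<delta>) > 0"
  proof -
    have "2 * real K / \<delta> > 1" using K0 delta by (simp add: field_simps)
    then show ?thesis by simp
  qed
  have n0: "n > 0"
  proof (rule ccontr)
    assume "\<not> n > 0"
    then have "n = 0" by simp
    with n_large have "2 * ln (2 * real K / \<delta>) / \<epsilon>\<^sup>2 \<le> 0" by simp
    moreover have "2 * ln (2 * real K / \<delta>) / \<epsilon>\<^sup>2 > 0" using lnpos eps by simp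
    ultimately show False by simp
  qed
  define t where "t = sqrt (ln (2 * real K / \<delta>) / (2 * real n))"
  have t0: "t \<ge> 0" unfolding t_def using lnpos n0 by simp
  have t2: "2 * real n * t\<^sup>2 = ln (2 * real K / \<delta>)"
    unfolding t_def using lnpos n0 by simp
  define q where "q k = measure M {\<omega> \<in> space M. S 1 \<omega> = k}" for k
  define g where "g k = (\<lambda>z::'x \<times> nat. if snd z = k then 1 else (0::real))" for k
  define N where "N = Xsp \<Otimes>\<^sub>M count_space {1..K}"
  have gmeas: "g k \<in> borel_measurable N" for k
    unfolding g_def N_def by (rule measurable_compose[OF measurable_snd borel_measurable_count_space])
  have rvN: "(\<lambda>\<omega>. (X i \<omega>, S i \<omega>)) \<in> M \<rightarrow>\<^sub>M N" if "i \<in> {1..n}" for i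
    using rv[OF that] unfolding N_def .
  have one: "1 \<in> {1..n}" using n0 by simp
  have hmeas: "(\<lambda>\<omega>. g k (X i \<omega>, S i \<omega>)) \<in> borel_measurable M" if "i \<in> {1..n}" for i k
    using measurable_compose[OF rvN[OF that] gmeas] by (simp add: comp_def)
  define B where "B k = {\<omega> \<in> space M. \<bar>(\<Sum>i\<in>{1..n}. g k (X i \<omega>, S i \<omega>)) / real n
      - expectation (\<lambda>\<omega>. g k (X 1 \<omega>, S 1 \<omega>))\<bar> \<ge> t}" for k
  have Bsets: "B k \<in> sets M" for k
  proof -
    have "(\<lambda>\<omega>. \<bar>(\<Sum>i\<in>{1..n}. g k (X i \<omega>, S i \<omega>)) / real n
      - expectation (\<lambda>\<omega>. g k (X 1 \<omega>, S 1 \<omega>))\<bar>) \<in> borel_measurable M"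
      using hmeas by (intro borel_measurable_abs borel_measurable_diff borel_measurable_divide
          borel_measurable_sum) auto
    then show ?thesis unfolding B_def by measurable
  qed
  have Bprob: "prob (B k) \<le> \<delta> / real K" if k: "k \<in> {1..K}" for k
  proof -
    interpret H: Hoeffding_ineq_iid M "{1..n}" "\<lambda>i \<omega>. g k (X i \<omega>, S i \<omega>)"
      "\<lambda>\<omega>. g k (X 1 \<omega>, S 1 \<omega>)" 0 1 "expectation (\<lambda>\<omega>. g k (X 1 \<omega>, S 1 \<omega>))"
    proof unfold_locales
      show "indep_vars (\<lambda>_. borel) (\<lambda>i \<omega>. g k (X i \<omega>, S i \<omega>)) {1..n}"
        using indep_vars_compose2[OF indep, of "\<lambda>_. g k" "\<lambda>_. borel"] gmeas
        unfolding N_def by simp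
    next
      fix i assume i: "i \<in> {1..n}"
      have "distr M borel (\<lambda>\<omega>. g k (X i \<omega>, S i \<omega>)) = distr (distr M N (\<lambda>\<omega>. (X i \<omega>, S i \<omega>))) borel (g k)"
        using distr_distr[OF gmeas rvN[OF i]] by (simp add: comp_def)
      also have "\<dots> = distr (distr M N (\<lambda>\<omega>. (X 1 \<omega>, S 1 \<omega>))) borel (g k)"
        using ident[OF i] unfolding N_def by simp
      also have "\<dots> = distr M borel (\<lambda>\<omega>. g k (X 1 \<omega>, S 1 \<omega>))"
        using distr_distr[OF gmeas rvN[OF one]] by (simp add: comp_def)
      finally show "distr M borel (\<lambda>\<omega>. g k (X i \<omega>, S i \<omega>)) = distr M borel (\<lambda>\<omega>. g k (X 1 \<omega>, S 1 \<omega>))" .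
    next
      show "random_variable borel (\<lambda>\<omega>. g k (X 1 \<omega>, S 1 \<omega>))" using hmeas[OF one] .
    next
      show "AE x in M. g k (X 1 x, S 1 x) \<in> {0..1}" by (simp add: g_def)
    qed simp_all
    have ne: "{1..n} \<noteq> {}" using one by blast
    have "prob (B k) \<le> 2 * exp (-2 * real n * t\<^sup>2 / (1 - 0)\<^sup>2)"
      using H.Hoeffding_ineq_abs_ge'[OF t0 zero_less_one ne] unfolding B_def by simp
    also have "\<dots> = 2 * exp (- ln (2 * real K / \<delta>))" using t2 by simp
    also have "\<dots> = \<delta> / real K"
      using lnpos K0 delta by (simp add: exp_minus field_simps)
    finally show ?thesis .
  qed
  define A where "A = space M - (\<Union>k\<in>{1..K}. B k)"
  have Asets: "A \<in> sets M" unfolding A_def using Bsets by auto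
  have "prob (\<Union>k\<in>{1..K}. B k) \<le> (\<Sum>k\<in>{1..K}. prob (B k))"
    using Bsets by (intro finite_measure_subadditive_finite) auto
  also have "\<dots> \<le> (\<Sum>k\<in>{1..K}. \<delta> / real K)" using Bprob by (intro sum_mono) auto
  also have "\<dots> = \<delta>" using K0 by simp
  finally have "prob (\<Union>k\<in>{1..K}. B k) \<le> \<delta>" .
  then have Aprob: "prob A \<ge> 1 - \<delta>"
    unfolding A_def using prob_compl[of "\<Union>k\<in>{1..K}. B k"] Bsets by auto
  show ?thesis
  proof (intro bexI[OF _ Asets] conjI Aprob ballI)
    fix \<omega> \<theta> assume \<omega>: "\<omega> \<in> A" and \<theta>: "\<theta> \<in> Theta"
    have \<omega>M: "\<omega> \<in> space M" using \<omega> unfolding A_def by auto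
    have Z: "(X i \<omega>, S i \<omega>) \<in> space Xsp \<times> {1..K}" if "i \<in> {1..n}" for i
      using measurable_space[OF rv[OF that] \<omega>M] by (simp add: space_pair_measure)
    have Eq: "expectation (\<lambda>\<omega>. g k (X 1 \<omega>, S 1 \<omega>)) = q k" for k
    proof -
      have "expectation (\<lambda>\<omega>. g k (X 1 \<omega>, S 1 \<omega>)) = expectation (indicator {\<omega> \<in> space M. S 1 \<omega> = k})"
        by (rule Bochner_Integration.integral_cong[OF refl]) (auto simp: g_def indicator_def)
      then show ?thesis unfolding q_def by (simp add: Int_absorb2 subset_eq)
    qed
    have dev: "\<bar>count_class S n k \<omega> / real n - q k\<bar> \<le> t" if "k \<in> {1..K}" for k
    proof -
      have "\<omega> \<notin> B k" using \<omega> that unfolding A_def by auto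
      then have "\<not> t \<le> \<bar>(\<Sum>i\<in>{1..n}. g k (X i \<omega>, S i \<omega>)) / real n - q k\<bar>"
        using \<omega>M unfolding B_def Eq by simp
      then show ?thesis unfolding count_class_def g_def by simp
    qed
    have lb: "0 \<le> loss \<theta> (X i \<omega>, S i \<omega>) \<and> loss \<theta> (X i \<omega>, S i \<omega>) \<le> L" if "i \<in> {1..n}" for i
    proof
      show "0 \<le> loss \<theta> (X i \<omega>, S i \<omega>)" using loss_nonneg[OF \<theta> Z[OF that]] .
      have "(\<lambda>(\<theta>, z). loss \<theta> z) (\<theta>, (X i \<omega>, S i \<omega>)) \<le> (SUP (\<theta>, z) \<in> Theta \<times> (space Xsp \<times> {1..K}). loss \<theta> z)"
        by (rule cSUP_upper[OF _ loss_bdd]) (use \<theta> Z[OF that] in auto)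
      then show "loss \<theta> (X i \<omega>, S i \<omega>) \<le> L" unfolding L_def by simp
    qed
    have L0: "L \<ge> 0" using lb[OF one] by linarith
    have main: "\<bar>risk_est_w loss X S K n p \<theta> \<omega> - risk_true_w loss X S K n p q \<theta> \<omega>\<bar> \<le> L * t / \<epsilon>"
      unfolding risk_est_w_def risk_true_w_def
    proof (rule det_bound[where s="\<lambda>i. S i \<omega>" and l="\<lambda>i. loss \<theta> (X i \<omega>, S i \<omega>)"
            and c="\<lambda>k. count_class S n k \<omega>"])
      show "S i \<omega> \<in> {1..K}" if "i \<in> {1..n}" for i using Z[OF that] by auto
      show "0 \<le> loss \<theta> (X i \<omega>, S i \<omega>) \<and> loss \<theta> (X i \<omega>, S i \<omega>) \<le> L" if "i \<in> {1..n}" for i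
        using lb[OF that] .
      show "p k \<ge> 0" if "k \<in> {1..K}" for k using p_nonneg[OF that] .
      show "(\<Sum>k=1..K. p k) = 1" by (rule p_sum)
      show "\<epsilon> < q k" if "k \<in> {1..K}" for k using p'_range[OF that] unfolding q_def by simp
      show "0 < \<epsilon>" by (rule eps(1))
      show "count_class S n k \<omega> = (\<Sum>i=1..n. if S i \<omega> = k then 1 else 0)" for k
        by (simp add: count_class_def)
      show "\<bar>count_class S n k \<omega> / real n - q k\<bar> \<le> t" if "k \<in> {1..K}" for k using dev[OF that] .
      show "n > 0" by (rule n0)
      show "t \<ge> 0" by (rule t0)
    qed
    have "L * t / \<epsilon> \<le> 2 * L / \<epsilon>\<^sup>2 * t"
    proof -
      have "1 / \<epsilon> \<le> 2 / \<epsilon>\<^sup>2" using eps by (simp add: field_simps power2_eq_square)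
      then have "L * t * (1 / \<epsilon>) \<le> L * t * (2 / \<epsilon>\<^sup>2)"
        using L0 t0 by (intro mult_left_mono) auto
      then show ?thesis by (simp add: field_simps)
    qed
    then show "\<bar>risk_est_w loss X S K n p \<theta> \<omega>
               - risk_true_w loss X S K n p (\<lambda>k. measure M {\<omega> \<in> space M. S 1 \<omega> = k}) \<theta> \<omega>\<bar>
              \<le> 2 * L / \<epsilon>\<^sup>2 * sqrt (ln (2 * real K / \<delta>) / (2 * real n))"
      using main unfolding q_def t_def[symmetric] by (simp add: q_def[abs_def])
  qed
qed

end
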